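(* Let $n\geq 2$ be an integer. Let $(A,\cdot)$ be a unital commutative associative algebra over $\mathbb{C}$ with unit $1$, and let $[\cdot,\ldots,\cdot]:A^n\to A$ be an $n$-ary bracket such that $(A,[\cdot,\ldots,\cdot])$ is an $n$-Lie algebra. Suppose that for all $u_1,\ldots,u_n\in A$, $$[u_1,\ldots,u_n]=\sum_{i=1}^{n}(-1)^{i-1}u_i\,[1,u_1,\ldots,\hat{u}_i,\ldots,u_n]$$ (where $\hat{u}_i$ means that $u_i$ is omitted), and $$[1,u_1u_2,u_3,\ldots,u_n]=u_1[1,u_2,u_3,\ldots,u_n]+u_2[1,u_1,u_3,\ldots,u_n].$$ Then $(A,\cdot,[\cdot,\ldots,\cdot])$ is a strong transposed Poisson $n$-Lie algebra.
   Context: An $n$-Lie algebra is a vector space $L$ with an $n$-linear skew-symmetric bracket $[\cdot,\ldots,\cdot]$ satisfying the generalized Jacobi identity $[[x_1,\ldots,x_n],y_2,\ldots,y_n]=\sum_{i=1}^n[x_1,\ldots,x_{i-1},[x_i,y_2,\ldots,y_n],x_{i+1},\ldots,x_n]$ for all $x_i,y_j\in L$. A transposed Poisson $n$-Lie algebra is a triple $(A,\cdot,[\cdot,\ldots,\cdot])$ where $(A,\cdot)$ is a commutative associative algebra, $(A,[\cdot,\ldots,\cdot])$ is an $n$-Lie algebra, and for all $h,a_1,\ldots,a_n\in A$: $n\,h\,[a_1,\ldots,a_n]=\sum_{i=1}^n[a_1,\ldots,h a_i,\ldots,a_n]$ (with $ha_i$ in the $i$-th slot). It is called strong if moreover for all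 $h,y_1,y_2,x_1,\ldots,x_{n-1}\in A$: $$y_1[hy_2,x_1,\ldots,x_{n-1}]-y_2[hy_1,x_1,\ldots,x_{n-1}]+\sum_{i=1}^{n-1}(-1)^{i-1}hx_i[y_1,y_2,x_1,\ldots,\hat{x}_i,\ldots,x_{n-1}]=0.$$ *)

theory Defs
  imports Complex_Main
begin

text \<open>A unital commutative associative algebra over the complex numbers:
  the ring structure comes from the type class comm_ring_1, the scalar
  multiplication is the explicit map scale, which must make the carrier a complex
  vector space and be compatible with the multiplication.\<close>
definition complex_comm_algebra :: "(complex \<Rightarrow> 'a::comm_ring_1 \<Rightarrow> 'a) \<Rightarrow> bool" where
  "complex_comm_algebra scale \<longleftrightarrow>
     Vector_Spaces.vector_space scale \<and>
     (\<forall>c x y. scale c (x * y) = scale c x * y)"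

text \<open>An n-ary bracket is modelled as a function on lists; only lists of
  length n are relevant. Arguments are indexed 0..n-1.\<close>

definition omit :: "nat \<Rightarrow> 'a list \<Rightarrow> 'a list" where
  "omit i xs = take i xs @ drop (Suc i) xs"

definition n_multilinear :: "nat \<Rightarrow> (complex \<Rightarrow> 'a::comm_ring_1 \<Rightarrow> 'a) \<Rightarrow> ('a list \<Rightarrow> 'a) \<Rightarrow> bool" where
  "n_multilinear n scale B \<longleftrightarrow>
     (\<forall>xs i. length xs = n \<longrightarrow> i < n \<longrightarrow>
        Vector_Spaces.linear scale scale (\<lambda>x. B (xs[i := x])))"

definition n_skew_symmetric :: "nat \<Rightarrow> ('a::comm_ring_1 list \<Rightarrow> 'a) \<Rightarrow> bool" where
  "n_skew_symmetric n B \<longleftrightarrow>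
     (\<forall>xs i j. length xs = n \<longrightarrow> i < n \<longrightarrow> j < n \<longrightarrow> i \<noteq> j \<longrightarrow>
        B (xs[i := xs ! j, j := xs ! i]) = - B xs)"

definition n_Jacobi :: "nat \<Rightarrow> ('a::comm_ring_1 list \<Rightarrow> 'a) \<Rightarrow> bool" where
  "n_Jacobi n B \<longleftrightarrow>
     (\<forall>xs ys. length xs = n \<longrightarrow> length ys = n - 1 \<longrightarrow>
        B (B xs # ys) = (\<Sum>i<n. B (xs[i := B (xs ! i # ys)])))"

definition n_Lie :: "nat \<Rightarrow> (complex \<Rightarrow> 'a::comm_ring_1 \<Rightarrow> 'a) \<Rightarrow> ('a list \<Rightarrow> 'a) \<Rightarrow> bool" where
  "n_Lie n scale B \<longleftrightarrow> n_multilinear n scale B \<and> n_skew_symmetric n B \<and> n_Jacobi n B"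

definition transposed_Poisson_n_Lie ::
    "nat \<Rightarrow> (complex \<Rightarrow> 'a::comm_ring_1 \<Rightarrow> 'a) \<Rightarrow> ('a list \<Rightarrow> 'a) \<Rightarrow> bool" where
  "transposed_Poisson_n_Lie n scale B \<longleftrightarrow>
     complex_comm_algebra scale \<and> n_Lie n scale B \<and>
     (\<forall>h xs. length xs = n \<longrightarrow>
        scale (of_nat n) (h * B xs) = (\<Sum>i<n. B (xs[i := h * xs ! i])))"

text \<open>Strong condition; index i here is 0-based, so the sign (-1)^(i-1) of the
  1-based formula becomes (-1)^i.\<close>
definition strong_transposed_Poisson_n_Lie ::
    "nat \<Rightarrow> (complex \<Rightarrow> 'a::comm_ring_1 \<Rightarrow> 'a) \<Rightarrow> ('a list \<Rightarrow> 'a) \<Rightarrow> bool" where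
  "strong_transposed_Poisson_n_Lie n scale B \<longleftrightarrow>
     transposed_Poisson_n_Lie n scale B \<and>
     (\<forall>h y1 y2 xs. length xs = n - 1 \<longrightarrow>
        y1 * B (h * y2 # xs) - y2 * B (h * y1 # xs)
        + (\<Sum>i<n - 1. (-1) ^ i * h * xs ! i * B (y1 # y2 # omit i xs)) = 0)"

end

theory Submission
  imports Defs
begin

definition Bexp :: "('a::comm_ring_1 list \<Rightarrow> 'a) \<Rightarrow> 'a list \<Rightarrow> 'a" where
  "Bexp E xs = (\<Sum>j<length xs. (-1) ^ j * xs ! j * E (omit j xs))"

definition altp :: "nat \<Rightarrow> ('a::comm_ring_1 list \<Rightarrow> 'a) \<Rightarrow> bool" where
  "altp m E \<longleftrightarrow> (\<forall>zs i j. length zs = m \<longrightarrow> i < m \<longrightarrow> j < m \<longrightarrow> i \<noteq> j \<longrightarrow>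
      E (zs[i := zs ! j, j := zs ! i]) = - E zs)"

definition derp :: "nat \<Rightarrow> ('a::comm_ring_1 list \<Rightarrow> 'a) \<Rightarrow> bool" where
  "derp m E \<longleftrightarrow> (\<forall>u v zs. length zs + 1 = m \<longrightarrow>
      E (u * v # zs) = u * E (v # zs) + v * E (u # zs))"

lemma omit_0[simp]: "omit 0 (a # ys) = ys"
  by (simp add: omit_def)

lemma omit_Suc[simp]: "omit (Suc j) (a # ys) = a # omit j ys"
  by (simp add: omit_def)

lemma length_omit[simp]: "i < length xs \<Longrightarrow> length (omit i xs) = length xs - 1"
  by (simp add: omit_def)

lemma Bexp_Nil[simp]: "Bexp E [] = 0"
  by (simp add: Bexp_def)

lemma Bexp_Cons: "Bexp E (a # ys) = a * E ys - Bexp (\<lambda>zs. E (a # zs)) ys"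
  unfolding Bexp_def
  by (simp add: sum.lessThan_Suc_shift sum_negf[symmetric] del: sum.lessThan_Suc)

lemma Bexp_diff: "Bexp (\<lambda>z. F z - G z) xs = Bexp F xs - Bexp G xs"
  unfolding Bexp_def by (simp add: sum_subtractf[symmetric] algebra_simps)

lemma Bexp_add: "Bexp (\<lambda>z. F z + G z) xs = Bexp F xs + Bexp G xs"
  unfolding Bexp_def by (simp add: sum.distrib[symmetric] algebra_simps)

lemma Bexp_cmult: "Bexp (\<lambda>z. c * F z) xs = c * Bexp F xs"
  unfolding Bexp_def by (simp add: sum_distrib_left algebra_simps)

lemma Bexp_cong:
  assumes "\<And>zs. length zs + 1 = length xs \<Longrightarrow> F zs = G zs"
  shows "Bexp F xs = Bexp G xs"
  unfolding Bexp_def by (rule sum.cong) (auto simp: assms)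

lemma Bexp_Bexp: "Bexp (Bexp G) xs = 0"
proof (induction xs arbitrary: G)
  case Nil then show ?case by simp
next
  case (Cons a ys)
  have "Bexp (Bexp G) (a # ys) = a * Bexp G ys - Bexp (\<lambda>zs. Bexp G (a # zs)) ys"
    by (rule Bexp_Cons)
  also have "(\<lambda>zs. Bexp G (a # zs)) = (\<lambda>zs. a * G zs - Bexp (\<lambda>z. G (a # z)) zs)"
    by (simp add: Bexp_Cons)
  also have "Bexp \<dots> ys = a * Bexp G ys - Bexp (Bexp (\<lambda>z. G (a # z))) ys"
    by (simp add: Bexp_diff Bexp_cmult)
  finally show ?case using Cons.IH by simp
qed

lemma omit_upd_Suc:
  assumes "Suc k < length ys"
  shows "omit k (ys[Suc k := ys ! k]) = omit (Suc k) ys"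
  using assms
proof (induction k arbitrary: ys)
  case 0 then show ?case by (cases ys; cases "tl ys") auto
next
  case (Suc k) then show ?case by (cases ys) auto
qed

lemma move_front:
  assumes "altp m E" "length ys = m" "i < m"
  shows "E (ys[i := w]) = (-1) ^ i * E (w # omit i ys)"
  using assms(2,3)
proof (induction i arbitrary: ys)
  case 0 then show ?case by (cases ys) auto
next
  case (Suc k)
  let ?zs = "ys[Suc k := ys ! k]"
  have sw: "(ys[Suc k := w])[k := (ys[Suc k := w]) ! Suc k, Suc k := (ys[Suc k := w]) ! k]
        = ?zs[k := w]"
    using Suc.prems by (simp add: list_update_swap)
  have "E (?zs[k := w]) = - E (ys[Suc k := w])"
    using assms(1)[unfolded altp_def, rule_format, of "ys[Suc k := w]" k "Suc k"] Suc.prems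
    unfolding sw by simp
  moreover have "E (?zs[k := w]) = (-1) ^ k * E (w # omit (Suc k) ys)"
    using Suc.IH[of ?zs] Suc.prems omit_upd_Suc[of k ys] by simp
  ultimately show ?case by simp
qed

lemma altp_shift:
  assumes "altp m E"
  shows "altp (m - 1) (\<lambda>zs. E (a # zs))"
  unfolding altp_def
proof (intro allI impI)
  fix zs :: "'a list" and i j
  assume h: "length zs = m - 1" "i < m - 1" "j < m - 1" "i \<noteq> j"
  have "E ((a # zs)[Suc i := (a # zs) ! Suc j, Suc j := (a # zs) ! Suc i]) = - E (a # zs)"
    using assms[unfolded altp_def, rule_format, of "a # zs" "Suc i" "Suc j"] h by simp
  then show "E (a # zs[i := zs ! j, j := zs ! i]) = - E (a # zs)" by simp
qed

lemma derp_shift: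
  assumes "altp m E" "derp m E"
  shows "derp (m - 1) (\<lambda>zs. E (a # zs))"
  unfolding derp_def
proof (intro allI impI)
  fix u v :: 'a and zs :: "'a list"
  assume h: "length zs + 1 = m - 1"
  have sw: "\<And>x. E (a # x # zs) = - E (x # a # zs)"
  proof -
    fix x
    have "E ((x # a # zs)[0 := (x # a # zs) ! 1, 1 := (x # a # zs) ! 0]) = - E (x # a # zs)"
      using assms(1)[unfolded altp_def, rule_format, of "x # a # zs" 0 1] h by simp
    then show "E (a # x # zs) = - E (x # a # zs)" by simp
  qed
  have "E (u * v # a # zs) = u * E (v # a # zs) + v * E (u # a # zs)"
    using assms(2) h unfolding derp_def by auto
  then show "E (a # u * v # zs) = u * E (a # v # zs) + v * E (a # u # zs)"
    using sw by (simp add: algebra_simps)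
qed

lemma TP_gen:
  "\<And>E. altp (length xs - 1) E \<Longrightarrow> derp (length xs - 1) E \<Longrightarrow>
     (\<Sum>i<length xs. Bexp E (xs[i := h * xs ! i])) = of_nat (length xs) * h * Bexp E xs"
proof (induction xs)
  case Nil then show ?case by simp
next
  case (Cons a ys)
  define m where "m = length ys"
  have alt: "altp m E" and der: "derp m E" using Cons.prems by (simp_all add: m_def)
  let ?Ea = "\<lambda>zs. E (a # zs)" and ?Eh = "\<lambda>zs. E (h # zs)"
  have IH: "(\<Sum>i<m. Bexp ?Ea (ys[i := h * ys ! i])) = of_nat m * h * Bexp ?Ea ys"
    using Cons.IH altp_shift[OF alt] derp_shift[OF alt der] by (simp add: m_def)
  have d1: "Bexp (\<lambda>zs. E (h * a # zs)) ys = h * Bexp ?Ea ys + a * Bexp ?Eh ys"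
  proof -
    have "Bexp (\<lambda>zs. E (h * a # zs)) ys = Bexp (\<lambda>zs. h * E (a # zs) + a * E (h # zs)) ys"
      by (rule Bexp_cong) (use der in \<open>auto simp: derp_def m_def\<close>)
    then show ?thesis by (simp add: Bexp_add Bexp_cmult)
  qed
  have d2: "E (ys[i := h * ys ! i]) = h * E ys + (-1) ^ i * ys ! i * E (h # omit i ys)"
    if "i < m" for i
  proof -
    have "E (ys[i := h * ys ! i]) = (-1) ^ i * E (h * ys ! i # omit i ys)"
      by (rule move_front[OF alt]) (use that in \<open>auto simp: m_def\<close>)
    also have "\<dots> = (-1) ^ i * (h * E (ys ! i # omit i ys) + ys ! i * E (h # omit i ys))"
      using der that by (simp add: derp_def m_def)
    also have "E (ys ! i # omit i ys) = (-1) ^ i * E ys"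
      using move_front[OF alt, of ys i "ys ! i"] that by (simp add: m_def)
    finally show ?thesis by (simp add: algebra_simps)
  qed
  have s2: "(\<Sum>i<m. E (ys[i := h * ys ! i])) = of_nat m * h * E ys + Bexp ?Eh ys"
    using d2 by (simp add: sum.distrib Bexp_def m_def)
  have "(\<Sum>i<length (a # ys). Bexp E ((a # ys)[i := h * (a # ys) ! i]))
      = Bexp E (h * a # ys) + (\<Sum>i<m. Bexp E (a # ys[i := h * ys ! i]))"
    by (simp add: sum.lessThan_Suc_shift m_def del: sum.lessThan_Suc)
  also have "\<dots> = h * a * E ys - Bexp (\<lambda>zs. E (h * a # zs)) ys
      + (\<Sum>i<m. a * E (ys[i := h * ys ! i]) - Bexp ?Ea (ys[i := h * ys ! i]))"
    by (simp add: Bexp_Cons)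
  also have "\<dots> = h * a * E ys - (h * Bexp ?Ea ys + a * Bexp ?Eh ys)
      + a * (of_nat m * h * E ys + Bexp ?Eh ys) - of_nat m * h * Bexp ?Ea ys"
    by (simp add: sum_subtractf sum_distrib_left[symmetric] s2 IH d1)
  also have "\<dots> = of_nat (length (a # ys)) * h * Bexp E (a # ys)"
    by (simp add: Bexp_Cons m_def algebra_simps)
  finally show ?case .
qed

lemma scale_of_nat:
  assumes "Vector_Spaces.vector_space (scale :: complex \<Rightarrow> 'a::comm_ring_1 \<Rightarrow> 'a)"
  shows "scale (of_nat k) x = of_nat k * x"
proof -
  interpret vector_space scale by (rule assms)
  show ?thesis
  proof (induction k)
    case 0 then show ?case by simp
  next
    case (Suc k)
    have "scale (of_nat (Suc k)) x = scale 1 x + scale (of_nat k) x"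
      using scale_left_distrib[of 1 "of_nat k" x] by (simp add: add.commute)
    then show ?case using Suc by (simp add: algebra_simps)
  qed
qed

theorem mainTheorem1:
  fixes n :: nat
    and scale :: "complex \<Rightarrow> 'a::comm_ring_1 \<Rightarrow> 'a"
    and B :: "'a list \<Rightarrow> 'a"
  assumes "n \<ge> 2"
    and "complex_comm_algebra scale"
    and "n_Lie n scale B"
    and "\<forall>us. length us = n \<longrightarrow>
           B us = (\<Sum>i<n. (-1) ^ i * us ! i * B (1 # omit i us))"
    and "\<forall>u1 u2 us. length us = n - 2 \<longrightarrow>
           B (1 # u1 * u2 # us) = u1 * B (1 # u2 # us) + u2 * B (1 # u1 # us)"
  shows "strong_transposed_Poisson_n_Lie n scale B"
proof -
  define D where "D = (\<lambda>zs. B (1 # zs))"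
  have Bx: "B us = Bexp D us" if "length us = n" for us
    unfolding assms(4)[rule_format, OF that] Bexp_def D_def using that by simp
  have skew: "n_skew_symmetric n B" using assms(3) by (simp add: n_Lie_def)
  have alt: "altp (n - 1) D"
    unfolding altp_def
  proof (intro allI impI)
    fix zs :: "'a list" and i j
    assume h: "length zs = n - 1" "i < n - 1" "j < n - 1" "i \<noteq> j"
    have "B ((1 # zs)[Suc i := (1 # zs) ! Suc j, Suc j := (1 # zs) ! Suc i]) = - B (1 # zs)"
      using skew[unfolded n_skew_symmetric_def, rule_format, of "1 # zs" "Suc i" "Suc j"] h by simp
    then show "D (zs[i := zs ! j, j := zs ! i]) = - D zs" by (simp add: D_def)
  qed
  have der: "derp (n - 1) D"
    unfolding derp_def D_def using assms(5) by auto
  have vs: "Vector_Spaces.vector_space scale" using assms(2) by (simp add: complex_comm_algebra_def)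
  have TP: "scale (of_nat n) (h * B xs) = (\<Sum>i<n. B (xs[i := h * xs ! i]))"
    if "length xs = n" for h xs
  proof -
    have "(\<Sum>i<n. B (xs[i := h * xs ! i])) = (\<Sum>i<length xs. Bexp D (xs[i := h * xs ! i]))"
      using that by (intro sum.cong) (auto simp: Bx)
    also have "\<dots> = of_nat n * h * Bexp D xs"
      using TP_gen[of xs D h] alt der that by simp
    finally show ?thesis using that Bx scale_of_nat[OF vs] by (simp add: mult.assoc)
  qed
  have ST: "y1 * B (h * y2 # xs) - y2 * B (h * y1 # xs)
        + (\<Sum>i<n - 1. (-1) ^ i * h * xs ! i * B (y1 # y2 # omit i xs)) = 0"
    if lx: "length xs = n - 1" for h y1 y2 xs
  proof -
    have lc: "\<And>y. length (y # xs) = n" using lx assms(1) by simp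
    have dh: "Bexp (\<lambda>zs. D (h * y # zs)) xs = h * Bexp (\<lambda>zs. D (y # zs)) xs + y * Bexp (\<lambda>zs. D (h # zs)) xs" for y
    proof -
      have "Bexp (\<lambda>zs. D (h * y # zs)) xs = Bexp (\<lambda>zs. h * D (y # zs) + y * D (h # zs)) xs"
        by (rule Bexp_cong) (use der lx in \<open>auto simp: derp_def\<close>)
      then show ?thesis by (simp add: Bexp_add Bexp_cmult)
    qed
    have b3: "B (y1 # y2 # zs) = y1 * D (y2 # zs) - y2 * D (y1 # zs) + Bexp (\<lambda>z. D (y1 # y2 # z)) zs"
      if "length zs + 1 = length xs" for zs
      using Bx[of "y1 # y2 # zs"] that lx assms(1) by (simp add: Bexp_Cons)
    have "(\<Sum>i<n - 1. (-1) ^ i * h * xs ! i * B (y1 # y2 # omit i xs))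
        = h * Bexp (\<lambda>zs. B (y1 # y2 # zs)) xs"
      using lx by (simp add: Bexp_def sum_distrib_left algebra_simps)
    also have "Bexp (\<lambda>zs. B (y1 # y2 # zs)) xs
        = Bexp (\<lambda>zs. y1 * D (y2 # zs) - y2 * D (y1 # zs) + Bexp (\<lambda>z. D (y1 # y2 # z)) zs) xs"
      by (rule Bexp_cong) (use b3 in auto)
    also have "\<dots> = y1 * Bexp (\<lambda>zs. D (y2 # zs)) xs - y2 * Bexp (\<lambda>zs. D (y1 # zs)) xs"
      by (simp add: Bexp_add Bexp_diff Bexp_cmult Bexp_Bexp)
    finally have s: "(\<Sum>i<n - 1. (-1) ^ i * h * xs ! i * B (y1 # y2 # omit i xs))
        = h * (y1 * Bexp (\<lambda>zs. D (y2 # zs)) xs - y2 * Bexp (\<lambda>zs. D (y1 # zs)) xs)" .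
    have e: "\<And>y. B (y # xs) = y * D xs - Bexp (\<lambda>zs. D (y # zs)) xs"
      using Bx[OF lc] by (simp add: Bexp_Cons)
    show ?thesis
      unfolding s e dh by (simp add: algebra_simps)
  qed
  have "transposed_Poisson_n_Lie n scale B"
    unfolding transposed_Poisson_n_Lie_def using assms(2,3) TP by simp
  then show ?thesis
    unfolding strong_transposed_Poisson_n_Lie_def using ST by simp
qed

end
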